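(* Let $G=\operatorname{GL}(n,\mathbb R)$. Then the domain $\Lambda\subset\mathfrak n$ is bounded.
   Context: For $G=\operatorname{GL}(n,\mathbb R)$ take $K=\operatorname{O}(n)$, $G_\mathbb{C}=\operatorname{GL}(n,\mathbb C)$, $K_\mathbb{C}=\operatorname{O}(n,\mathbb C)$, $\mathfrak a$ the real diagonal matrices, $A$ the positive diagonal matrices, $\mathfrak n$ the strictly upper triangular real matrices, $N=\exp\mathfrak n$, $\overline N$ the lower triangular unipotent matrices. The restricted roots are $\alpha_{ij}(Y)=Y_i-Y_j$ ($i\ne j$) for $Y=\operatorname{diag}(Y_1,\dots,Y_n)$. Let $\Omega=\{Y\in\mathfrak a:|Y_i-Y_j|<\pi/2\ \forall i\neq j\}$ and the crown $\Xi=G\exp(i\Omega)K_\mathbb{C}/K_\mathbb{C}\subset G_\mathbb{C}/K_\mathbb{C}$, with base point $z_0=K_\mathbb{C}$. $\Lambda$ is the connected component containing $0$ of $\{Y\in\mathfrak n:\exp(iY)\cdot z_0\in\Xi\}$. *)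

theory Defs
  imports "HOL-Analysis.Analysis"
begin

text \<open>Matrices are indexed by a finite linearly ordered type 'n (so n = CARD('n)).\<close>

primrec mpow :: "'a::comm_ring_1^'n^'n \<Rightarrow> nat \<Rightarrow> 'a^'n^'n" where
  "mpow A 0 = mat 1"
| "mpow A (Suc k) = A ** mpow A k"

definition mexp :: "complex^'n^'n \<Rightarrow> complex^'n^'n" where
  "mexp A = (\<Sum>k. (1 / fact k) *\<^sub>R mpow A k)"

definition cmat :: "real^'n^'n \<Rightarrow> complex^'n^'n" where
  "cmat A = (\<chi> i j. complex_of_real (A $ i $ j))"

definition imat :: "real^'n^'n \<Rightarrow> complex^'n^'n" where
  "imat Y = (\<chi> i j. \<i> * complex_of_real (Y $ i $ j))"

definition GLR :: "(real^'n^'n) set" where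
  "GLR = {g. invertible g}"

definition OC :: "(complex^'n^'n) set" where
  "OC = {k. transpose k ** k = mat 1}"

definition diag_alg :: "(real^'n^'n) set" where
  "diag_alg = {Y. \<forall>i j. i \<noteq> j \<longrightarrow> Y $ i $ j = 0}"

definition Omega :: "(real^'n^'n) set" where
  "Omega = {Y \<in> diag_alg. \<forall>i j. i \<noteq> j \<longrightarrow> \<bar>Y $ i $ i - Y $ j $ j\<bar> < pi / 2}"

definition nilp_alg :: "(real^('n::{finite,linorder})^('n::{finite,linorder})) set" where
  "nilp_alg = {Y. \<forall>i j. j \<le> i \<longrightarrow> Y $ i $ j = 0}"

text \<open>h K_C \<in> \<Xi> = G exp(i\<Omega>) K_C / K_C, i.e. h \<in> G exp(i\<Omega>) K_C.\<close>
definition in_crown :: "complex^'n^'n \<Rightarrow> bool" where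
  "in_crown h \<longleftrightarrow> (\<exists>g\<in>GLR. \<exists>Y\<in>Omega. \<exists>k\<in>OC. h = cmat g ** mexp (imat Y) ** k)"

definition Lambda :: "(real^('n::{finite,linorder})^('n::{finite,linorder})) set" where
  "Lambda = connected_component_set {Y \<in> nilp_alg. in_crown (mexp (imat Y))} 0"

end

theory Submission
  imports Defs
begin


definition supper :: "('a::zero)^('n::{finite,linorder})^('n::{finite,linorder}) \<Rightarrow> bool" where
 "supper A \<longleftrightarrow> (\<forall>i j. j \<le> i \<longrightarrow> A$i$j = 0)"

lemma mpow_supper_nz:
  fixes R :: "'a::comm_ring_1^('n::{finite,linorder})^('n::{finite,linorder})"
  assumes "supper R" "mpow R k $ i $ j \<noteq> 0"
  shows "k \<le> card {m. i \<le> m \<and> m < j} \<and> i \<le> j"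
using assms(2) proof (induction k arbitrary: i)
  case 0 thus ?case by (simp add: mat_def split: if_splits)
next
  case (Suc k)
  have "(\<Sum>l\<in>UNIV. R$i$l * mpow R k $ l $ j) \<noteq> 0" using Suc.prems by (simp add: matrix_matrix_mult_def)
  then obtain l where l: "R$i$l * mpow R k $ l $ j \<noteq> 0" by (meson sum.neutral)
  hence "i < l" using assms(1) unfolding supper_def by (metis mult_zero_left not_le)
  have IH: "k \<le> card {m. l \<le> m \<and> m < j} \<and> l \<le> j" using Suc.IH[of l] l by (metis mult_zero_right)
  have ij: "i < j" using IH \<open>i < l\<close> by auto
  have "insert i {m. l \<le> m \<and> m < j} \<subseteq> {m. i \<le> m \<and> m < j}" using \<open>i<l\<close> ij by auto
  hence "card (insert i {m. l \<le> m \<and> m < j}) \<le> card {m. i \<le> m \<and> m < j}" by (intro card_mono) auto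
  moreover have "card (insert i {m. l \<le> m \<and> m < j}) = Suc (card {m. l \<le> m \<and> m < j})"
    using \<open>i<l\<close> by (intro card_insert_disjoint) auto
  ultimately show ?case using IH ij by auto
qed

lemma mpow_supper_zero:
  fixes R :: "'a::comm_ring_1^('n::{finite,linorder})^('n::{finite,linorder})"
  assumes "supper R" "CARD('n) \<le> k"
  shows "mpow R k = 0"
proof -
  have "mpow R k $ i $ j = 0" for i j
  proof (rule ccontr)
    assume "mpow R k $ i $ j \<noteq> 0"
    hence "k \<le> card {m. i \<le> m \<and> m < j}" using mpow_supper_nz[OF assms(1)] by blast
    moreover have "card {m. i \<le> m \<and> m < j} \<le> card (UNIV - {j} :: 'n set)" by (intro card_mono) auto
    moreover have "card (UNIV - {j} :: 'n set) < CARD('n)"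
      by (simp add: card_Diff_singleton_if)
    ultimately show False using assms(2) by linarith
  qed
  thus ?thesis by (simp add: vec_eq_iff)
qed

lemma mpow_supper_low:
  fixes R :: "'a::comm_ring_1^('n::{finite,linorder})^('n::{finite,linorder})"
  assumes "supper R" "0 < k" "j \<le> i"
  shows "mpow R k $ i $ j = 0"
  using mpow_supper_nz[OF assms(1), of k i j] assms(2,3)
  by (metis (no_types, lifting) Collect_empty_eq card.empty leD le_zero_eq order.strict_trans2 not_gr0)

lemma mpow_add: "mpow R (a + b) = mpow R a ** mpow R b"
  by (induction a) (simp_all add: matrix_mul_assoc)



definition Ec :: "complex \<Rightarrow> complex^('n::{finite,linorder})^('n::{finite,linorder}) \<Rightarrow> complex^('n::{finite,linorder})^('n::{finite,linorder})" where
 "Ec c R = (\<chi> i j. \<Sum>k<CARD('n). c^k / fact k * (mpow R k $ i $ j))"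

lemma binom_coeff:
  fixes a b :: complex
  shows "(\<Sum>k\<le>s. a^k / fact k * (b^(s-k) / fact (s-k))) = (a+b)^s / fact s"
proof -
  have "(a+b)^s / fact s = (\<Sum>k\<le>s. (of_nat (s choose k)) * a^k * b^(s-k)) / fact s"
    by (simp add: binomial_ring)
  also have "\<dots> = (\<Sum>k\<le>s. (of_nat (s choose k)) * a^k * b^(s-k) / fact s)"
    by (simp add: sum_divide_distrib)
  also have "\<dots> = (\<Sum>k\<le>s. a^k / fact k * (b^(s-k) / fact (s-k)))"
    by (intro sum.cong refl) (simp add: binomial_fact field_simps)
  finally show ?thesis by simp
qed

lemma Ec_mult:
  fixes R :: "complex^('n::{finite,linorder})^('n::{finite,linorder})"
  assumes "supper R"
  shows "Ec a R ** Ec b R = Ec (a+b) R"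
proof -
  let ?N = "CARD('n)"
  have "(Ec a R ** Ec b R) $ i $ j = Ec (a+b) R $ i $ j" for i j
  proof -
    define F where "F s = mpow R s $ i $ j" for s
    have F0: "F s = 0" if "?N \<le> s" for s using mpow_supper_zero[OF assms that] by (simp add: F_def)
    have "(Ec a R ** Ec b R) $ i $ j
       = (\<Sum>l\<in>UNIV. (\<Sum>k<?N. a^k / fact k * (mpow R k $ i $ l)) * (\<Sum>m<?N. b^m / fact m * (mpow R m $ l $ j)))"
      by (simp add: matrix_matrix_mult_def Ec_def)
    also have "\<dots> = (\<Sum>l\<in>UNIV. \<Sum>k<?N. \<Sum>m<?N. (a^k / fact k * (b^m / fact m)) * (mpow R k $ i $ l * mpow R m $ l $ j))"
      by (simp add: sum_product mult_ac)
    also have "\<dots> = (\<Sum>k<?N. \<Sum>l\<in>UNIV. \<Sum>m<?N. (a^k / fact k * (b^m / fact m)) * (mpow R k $ i $ l * mpow R m $ l $ j))"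
      by (rule sum.swap)
    also have "\<dots> = (\<Sum>k<?N. \<Sum>m<?N. \<Sum>l\<in>UNIV. (a^k / fact k * (b^m / fact m)) * (mpow R k $ i $ l * mpow R m $ l $ j))"
      by (intro sum.cong refl) (rule sum.swap)
    also have "\<dots> = (\<Sum>k<?N. \<Sum>m<?N. a^k / fact k * (b^m / fact m) * (\<Sum>l\<in>UNIV. mpow R k $ i $ l * mpow R m $ l $ j))"
      by (simp add: sum_distrib_left)
    also have "\<dots> = (\<Sum>k<?N. \<Sum>m<?N. a^k / fact k * (b^m / fact m) * F (k+m))"
      by (simp add: F_def mpow_add matrix_matrix_mult_def)
    also have "\<dots> = (\<Sum>(k,m)\<in>{..<?N}\<times>{..<?N}. a^k / fact k * (b^m / fact m) * F (k+m))"
      by (simp add: sum.cartesian_product)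
    also have "\<dots> = (\<Sum>(k,m)\<in>{(k,m). k+m < ?N}. a^k / fact k * (b^m / fact m) * F (k+m))"
      by (rule sum.mono_neutral_right) (auto, metis F0 not_less)
    also have "\<dots> = (\<Sum>s<?N. \<Sum>k\<le>s. a^k / fact k * (b^(s-k) / fact (s-k)) * F s)"
      by (subst sum.triangle_reindex) simp
    also have "\<dots> = (\<Sum>s<?N. (a+b)^s / fact s * F s)"
      by (intro sum.cong refl) (simp only: sum_distrib_right[symmetric] binom_coeff)
    finally show ?thesis by (simp add: Ec_def F_def)
  qed
  thus ?thesis by (simp add: vec_eq_iff)
qed

lemma Ec_zero: "Ec 0 (R::complex^('n::{finite,linorder})^('n::{finite,linorder})) = mat 1"
proof -
  have "(\<Sum>k<CARD('n). (0::complex)^k / fact k * (mpow R k $ i $ j)) = mat 1 $ i $ j" for i j :: 'n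
  proof -
    have "(\<Sum>k<CARD('n). (0::complex)^k / fact k * (mpow R k $ i $ j)) = (\<Sum>k\<in>{0}. (0::complex)^k / fact k * (mpow R k $ i $ j))"
      by (rule sum.mono_neutral_right) auto
    thus ?thesis by simp
  qed
  thus ?thesis by (simp add: Ec_def vec_eq_iff)
qed

lemma Ec_diag:
  fixes R :: "complex^('n::{finite,linorder})^('n::{finite,linorder})"
  assumes "supper R" "j \<le> i"
  shows "Ec c R $ i $ j = (if i = j then 1 else 0)"
proof -
  have "(\<Sum>k<CARD('n). c^k / fact k * (mpow R k $ i $ j)) = (\<Sum>k\<in>{0}. c^k / fact k * (mpow R k $ i $ j))"
    by (rule sum.mono_neutral_right) (auto simp: mpow_supper_low[OF assms(1) _ assms(2)])
  thus ?thesis by (simp add: Ec_def mat_def)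
qed



lemma supper_nilp: "X \<in> nilp_alg \<Longrightarrow> supper X"
  by (simp add: nilp_alg_def supper_def)

lemma supper_cmat: "supper X \<Longrightarrow> supper (cmat X)"
  by (simp add: supper_def cmat_def)

lemma supper_imat: "supper X \<Longrightarrow> supper (imat X)"
  by (simp add: supper_def imat_def)

lemma cmat_mult: "cmat (A ** B) = cmat A ** cmat B"
  by (simp add: cmat_def matrix_matrix_mult_def vec_eq_iff)

lemma cmat_one: "cmat (mat 1) = mat 1"
  by (simp add: cmat_def mat_def vec_eq_iff)

lemma mpow_cmat: "mpow (cmat X) k = cmat (mpow X k)"
  by (induction k) (simp_all add: cmat_one cmat_mult)

lemma mpow_imat: "mpow (imat X) k $ i $ j = \<i>^k * (mpow (cmat X) k $ i $ j)"
proof (induction k arbitrary: i j)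
  case 0 thus ?case by simp
next
  case (Suc k)
  have "mpow (imat X) (Suc k) $ i $ j = (\<Sum>l\<in>UNIV. imat X $ i $ l * mpow (imat X) k $ l $ j)"
    by (simp add: matrix_matrix_mult_def)
  also have "\<dots> = (\<Sum>l\<in>UNIV. (\<i> * of_real (X$i$l)) * (\<i>^k * (mpow (cmat X) k $ l $ j)))"
    unfolding Suc.IH by (simp add: imat_def)
  also have "\<dots> = \<i>^Suc k * (\<Sum>l\<in>UNIV. cmat X $ i $ l * (mpow (cmat X) k $ l $ j))"
    by (simp add: sum_distrib_left cmat_def mult_ac)
  finally show ?case by (simp add: matrix_matrix_mult_def)
qed

lemma mexp_nilp:
  fixes X :: "real^('n::{finite,linorder})^('n::{finite,linorder})"
  assumes "supper X"
  shows "mexp (imat X) = Ec \<i> (cmat X)"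
proof -
  have "mexp (imat X) = (\<Sum>k<CARD('n). (1 / fact k) *\<^sub>R mpow (imat X) k)"
    unfolding mexp_def
    by (rule suminf_finite) (auto simp: mpow_supper_zero[OF supper_imat[OF assms]])
  thus ?thesis
    by (simp add: vec_eq_iff Ec_def mpow_imat) (simp add: scaleR_conv_of_real)
qed

lemma cnj_Ec: "cnj (Ec c (cmat X) $ i $ j) = Ec (cnj c) (cmat X) $ i $ j"
  unfolding Ec_def mpow_cmat by (simp add: cmat_def)

lemma sum_ifmult: "(\<Sum>l\<in>(UNIV::'n::finite set). (if l = i then a else 0) * f l) = a * (f i :: 'a::comm_semiring_1)"
proof -
  have "(\<Sum>l\<in>UNIV. (if l = i then a else 0) * f l) = (\<Sum>l\<in>UNIV. if l = i then a * f l else 0)"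
    by (intro sum.cong) auto
  thus ?thesis by simp
qed

lemma mpow_diag:
  fixes Y :: "real^('n::{finite,linorder})^('n::{finite,linorder})"
  assumes "Y \<in> diag_alg"
  shows "mpow (imat Y) k = (\<chi> i j. if i = j then (\<i> * of_real (Y$i$i))^k else 0)"
proof (induction k)
  case 0 thus ?case by (simp add: mat_def vec_eq_iff)
next
  case (Suc k)
  have d: "imat Y $ i $ l = (if l = i then \<i> * of_real (Y$i$i) else 0)" for i l
    using assms by (auto simp: imat_def diag_alg_def)
  have "mpow (imat Y) (Suc k) $ i $ j = (if i = j then (\<i> * of_real (Y$i$i))^Suc k else 0)" for i j
  proof -
    have "mpow (imat Y) (Suc k) $ i $ j = \<i> * of_real (Y$i$i) * mpow (imat Y) k $ i $ j"
      by (simp add: matrix_matrix_mult_def d sum_ifmult)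
    thus ?thesis unfolding Suc by simp
  qed
  thus ?case by (simp add: vec_eq_iff)
qed

lemma mexp_diag:
  fixes Y :: "real^('n::{finite,linorder})^('n::{finite,linorder})"
  assumes "Y \<in> diag_alg"
  shows "mexp (imat Y) = (\<chi> i j. if i = j then exp (\<i> * of_real (Y$i$i)) else 0)"
proof -
  have "(\<lambda>k. (1 / fact k) *\<^sub>R mpow (imat Y) k) sums (\<chi> i j. if i = j then exp (\<i> * of_real (Y$i$i)) else 0)"
    unfolding sums_def
  proof (intro vec_tendstoI)
    fix i j :: 'n
    have "(\<lambda>n. (\<Sum>k<n. (1 / fact k) *\<^sub>R mpow (imat Y) k) $ i $ j) = (\<lambda>n. \<Sum>k<n. (if i = j then (1 / fact k) *\<^sub>R (\<i> * of_real (Y$i$i))^k else 0))"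
      by (cases "i = j") (simp_all add: mpow_diag[OF assms])
    moreover have "(\<lambda>n. \<Sum>k<n. (if i = j then (1 / fact k) *\<^sub>R (\<i> * of_real (Y$i$i))^k else 0)) \<longlonglongrightarrow> (if i = j then exp (\<i> * of_real (Y$i$i)) else 0)"
      using exp_converges[of "\<i> * of_real (Y$i$i)"] by (auto simp: sums_def inverse_eq_divide)
    ultimately show "(\<lambda>n. (\<Sum>k<n. (1 / fact k) *\<^sub>R mpow (imat Y) k) $ i $ j) \<longlonglongrightarrow> (\<chi> i j. if i = j then exp (\<i> * of_real (Y$i$i)) else 0) $ i $ j"
      by simp
  qed
  thus ?thesis unfolding mexp_def by (rule sums_unique[symmetric])
qed



lemma sum_ifmult2: "(\<Sum>l\<in>(UNIV::'n::finite set). f l * (if l = i then a else 0)) = (f i :: 'a::comm_semiring_1) * a"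
  using sum_ifmult[of i a f] by (simp add: mult.commute)

lemma crown_ineq:
  fixes h :: "complex^('n::{finite,linorder})^('n::{finite,linorder})"
  assumes "in_crown h"
  shows "\<exists>\<omega>. cmod \<omega> = 1 \<and> (\<forall>v::real^('n::{finite,linorder}). 0 \<le> Re (\<omega> * (\<Sum>j\<in>UNIV. (\<Sum>i\<in>UNIV. of_real (v$i) * h$i$j)^2)))"
proof -
  obtain g Y K where Y: "Y \<in> Omega" and K: "K \<in> OC" and h: "h = cmat g ** mexp (imat Y) ** K"
    using assms unfolding in_crown_def by blast
  have KK: "K ** transpose K = mat 1" using K unfolding OC_def by (simp add: matrix_left_right_inverse)
  define y where "y i = Y$i$i" for i
  have Yd: "Y \<in> diag_alg" using Y by (simp add: Omega_def)
  have Ydiff: "\<bar>y i - y j\<bar> < pi/2" if "i \<noteq> j" for i j using Y that by (simp add: Omega_def y_def)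
  have "Min (range y) \<in> range y" by (rule Min_in) auto
  then obtain a where a: "y a = Min (range y)" by (auto simp: image_iff)
  have "Max (range y) \<in> range y" by (rule Max_in) auto
  then obtain b where b: "y b = Max (range y)" by (auto simp: image_iff)
  have ya: "y a \<le> y m" and yb: "y m \<le> y b" for m using a b by auto
  have ab: "y b - y a \<le> pi/2"
  proof (cases "a = b")
    case True thus ?thesis by simp
  next
    case False hence "\<bar>y b - y a\<bar> < pi/2" using Ydiff[of b a] by auto
    thus ?thesis using abs_ge_self[of "y b - y a"] by linarith
  qed
  define \<theta> where "\<theta> = y a + y b"
  define \<omega> where "\<omega> = exp (- (\<i> * of_real \<theta>))"
  have "cmod \<omega> = 1" by (simp add: \<omega>_def norm_exp_eq_Re)
  moreover have "0 \<le> Re (\<omega> * (\<Sum>j\<in>UNIV. (\<Sum>i\<in>UNIV. of_real (v$i) * h$i$j)^2))" for v :: "real^('n::{finite,linorder})"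
  proof -
    define u where "u m = (\<Sum>i\<in>UNIV. v$i * g$i$m)" for m
    define x where "x m = of_real (u m) * exp (\<i> * of_real (y m))" for m
    have E: "mexp (imat Y) = (\<chi> i j. if i = j then exp (\<i> * of_real (y i)) else 0)"
      unfolding y_def by (rule mexp_diag[OF Yd])
    have gE: "(cmat g ** mexp (imat Y)) $ i $ l = of_real (g$i$l) * exp (\<i> * of_real (y l))" for i l
    proof -
      have "(cmat g ** mexp (imat Y)) $ i $ l = (\<Sum>m\<in>UNIV. cmat g $ i $ m * (if m = l then exp (\<i> * of_real (y l)) else 0))"
        unfolding E matrix_matrix_mult_def by (simp, intro sum.cong refl, auto)
      thus ?thesis by (simp only: sum_ifmult2) (simp add: cmat_def)
    qed
    have hij: "h$i$j = (\<Sum>m\<in>UNIV. (cmat g ** mexp (imat Y))$i$m * K$m$j)" for i j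
      unfolding h by (subst matrix_matrix_mult_def[of "cmat g ** mexp (imat Y)"]) simp
    have hv: "(\<Sum>i\<in>UNIV. of_real (v$i) * h$i$j) = (\<Sum>m\<in>UNIV. x m * K$m$j)" for j
    proof -
      have "(\<Sum>i\<in>UNIV. of_real (v$i) * h$i$j) = (\<Sum>i\<in>UNIV. \<Sum>m\<in>UNIV. of_real (v$i) * (of_real (g$i$m) * exp (\<i> * of_real (y m)) * K$m$j))"
        by (simp add: hij gE sum_distrib_left)
      also have "\<dots> = (\<Sum>m\<in>UNIV. \<Sum>i\<in>UNIV. of_real (v$i) * (of_real (g$i$m) * exp (\<i> * of_real (y m)) * K$m$j))"
        by (rule sum.swap)
      also have "\<dots> = (\<Sum>m\<in>UNIV. x m * K$m$j)"
        by (intro sum.cong refl) (simp add: x_def u_def sum_distrib_left mult_ac)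
      finally show ?thesis .
    qed
    have sq: "(\<Sum>j\<in>UNIV. (\<Sum>m\<in>UNIV. x m * K$m$j)^2) = (\<Sum>m\<in>UNIV. (x m)^2)"
    proof -
      have "(\<Sum>j\<in>UNIV. (\<Sum>m\<in>UNIV. x m * K$m$j)^2) = (\<Sum>j\<in>UNIV. \<Sum>m\<in>UNIV. \<Sum>m'\<in>UNIV. x m * x m' * (K$m$j * K$m'$j))"
        by (simp add: power2_eq_square sum_product mult_ac)
      also have "\<dots> = (\<Sum>m\<in>UNIV. \<Sum>j\<in>UNIV. \<Sum>m'\<in>UNIV. x m * x m' * (K$m$j * K$m'$j))"
        by (rule sum.swap)
      also have "\<dots> = (\<Sum>m\<in>UNIV. \<Sum>m'\<in>UNIV. \<Sum>j\<in>UNIV. x m * x m' * (K$m$j * K$m'$j))"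
        by (rule sum.cong[OF refl], rule sum.swap)
      also have "\<dots> = (\<Sum>m\<in>UNIV. \<Sum>m'\<in>UNIV. x m * x m' * (K ** transpose K) $ m $ m')"
        by (simp add: matrix_matrix_mult_def transpose_def sum_distrib_left)
      also have "\<dots> = (\<Sum>m\<in>UNIV. (x m)^2)"
      proof -
        have inner: "(\<Sum>m'\<in>UNIV. x m * x m' * (if m = m' then 1 else 0)) = x m * x m" for m
        proof -
          have "(\<Sum>m'\<in>UNIV. x m * x m' * (if m = m' then 1 else 0)) = (\<Sum>m'\<in>UNIV. if m' = m then x m * x m' else 0)"
            by (intro sum.cong) auto
          thus ?thesis by simp
        qed
        show ?thesis using inner by (simp add: KK mat_def power2_eq_square)
      qed
      finally show ?thesis .
    qed
    have trm: "0 \<le> Re (\<omega> * (x m)^2)" for m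
    proof -
      have e1: "-(\<i> * of_real  \<theta>) + (\<i> * of_real (y m) + \<i> * of_real (y m)) = \<i> * of_real (2 * y m - \<theta>)"
        by (simp add: algebra_simps)
      have e2: "\<omega> * (exp (\<i> * of_real (y m)))^2 = exp (\<i> * of_real (2 * y m - \<theta>))"
        unfolding \<omega>_def power2_eq_square e1[symmetric] exp_add by simp
      have "\<omega> * (x m)^2 = of_real ((u m)^2) * (\<omega> * (exp (\<i> * of_real (y m)))^2)"
        by (simp add: x_def power_mult_distrib)
      hence "\<omega> * (x m)^2 = of_real ((u m)^2) * exp (\<i> * of_real (2 * y m - \<theta>))"
        using e2 by simp
      hence "Re (\<omega> * (x m)^2) = (u m)^2 * cos (2 * y m - \<theta>)"
        by (simp add: Re_exp)
      moreover have "0 \<le> cos (2 * y m - \<theta>)"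
        using ya[of m] yb[of m] ab by (intro cos_ge_zero) (auto simp: \<theta>_def)
      ultimately show ?thesis by simp
    qed
    have "Re (\<omega> * (\<Sum>j\<in>UNIV. (\<Sum>i\<in>UNIV. of_real (v$i) * h$i$j)^2)) = (\<Sum>m\<in>UNIV. Re (\<omega> * (x m)^2))"
      by (simp add: hv sq sum_distrib_left)
    also have "\<dots> \<ge> 0" by (intro sum_nonneg trm)
    finally show ?thesis .
  qed
  ultimately show ?thesis by blast
qed



lemma prod_bound:
  fixes A B :: "complex^('n::{finite,linorder})^('n::{finite,linorder})" and \<alpha> \<beta> :: real
  assumes "\<And>i j. cmod (A$i$j) \<le> \<alpha>" "\<And>i j. cmod (B$i$j) \<le> \<beta>"
  shows "cmod ((A ** B)$i$j) \<le> CARD('n) * (\<alpha> * \<beta>)"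
proof -
  have "cmod ((A ** B)$i$j) \<le> (\<Sum>l\<in>UNIV. cmod (A$i$l * B$l$j))"
    unfolding matrix_matrix_mult_def by (simp add: norm_sum)
  also have "\<dots> \<le> (\<Sum>l\<in>(UNIV::'n set). \<alpha> * \<beta>)"
    by (intro sum_mono) (simp add: norm_mult mult_mono' assms)
  finally show ?thesis by simp
qed

lemma mpow_bound:
  fixes Q :: "complex^('n::{finite,linorder})^('n::{finite,linorder})"
  assumes "\<And>i j. cmod (Q$i$j) \<le> 1"
  shows "cmod (mpow Q k $i$j) \<le> real CARD('n) ^ k"
proof (induction k arbitrary: i j)
  case 0 thus ?case by (simp add: mat_def)
next
  case (Suc k)
  have "cmod (mpow Q (Suc k) $i$j) \<le> CARD('n) * (1 * real CARD('n) ^ k)"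
    using prod_bound[of Q 1 "mpow Q k" "real CARD('n) ^ k" i j] assms Suc.IH by (simp add: matrix_matrix_mult_def)
  thus ?case by simp
qed

lemma sum_if_out:
  fixes g :: "'n::finite \<Rightarrow> 'a::ab_group_add"
  shows "(\<Sum>l\<in>UNIV. if l = i then 0 else g l) = (\<Sum>l\<in>UNIV. g l) - g i"
proof -
  have "(\<Sum>l\<in>UNIV. if l = i then 0 else g l) = (\<Sum>l\<in>UNIV. g l - (if l = i then g l else 0))"
    by (intro sum.cong) auto
  thus ?thesis by (simp add: sum_subtractf)
qed

definition CW :: "nat \<Rightarrow> real" where "CW N = (\<Sum>k<N. 2 * real N ^ (k+1))"

lemma tri_solve:
  fixes L W R :: "complex^('n::{finite,linorder})^('n::{finite,linorder})"
  assumes Lup: "\<And>i j. j < i \<Longrightarrow> L$i$j = 0"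
    and Ldiag: "\<And>i. 1 \<le> cmod (L$i$i)"
    and Loff: "\<And>i j. i \<noteq> j \<Longrightarrow> cmod (L$i$j) \<le> 1"
    and Rb: "\<And>i j. cmod (R$i$j) \<le> 2"
    and eq: "L ** W = R"
  shows "cmod (W$i$j) \<le> CW CARD('n)"
proof -
  let ?N = "CARD('n)"
  have Lnz: "L$i$i \<noteq> 0" for i using Ldiag[of i] by auto
  define Q where "Q = (\<chi> i l. if l = i then 0 else - L$i$l / L$i$i)"
  define R' where "R' = (\<chi> i j. R$i$j / L$i$i)"
  have step: "W = R' + Q ** W"
  proof -
    have "W$i$j = R'$i$j + (Q ** W)$i$j" for i j
    proof -
      have "(Q ** W)$i$j = (\<Sum>l\<in>UNIV. if l = i then 0 else - L$i$l / L$i$i * W$l$j)"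
        unfolding Q_def matrix_matrix_mult_def by (simp, intro sum.cong refl, simp)
      also have "\<dots> = (\<Sum>l\<in>UNIV. - L$i$l / L$i$i * W$l$j) - (- L$i$i / L$i$i * W$i$j)"
        by (rule sum_if_out)
      also have "(\<Sum>l\<in>UNIV. - L$i$l / L$i$i * W$l$j) = - R$i$j / L$i$i"
        using eq[symmetric] by (simp add: matrix_matrix_mult_def sum_divide_distrib[symmetric] sum_negf)
      finally show ?thesis using Lnz[of i] by (simp add: R'_def)
    qed
    thus ?thesis by (simp add: vec_eq_iff)
  qed
  have iter: "W = (\<Sum>k<m. mpow Q k ** R') + mpow Q m ** W" for m
  proof (induction m)
    case 0 thus ?case by simp
  next
    case (Suc m)
    have q1: "mpow Q m ** Q = mpow Q (Suc m)"
      using mpow_add[of Q m 1] by simp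
    have "W = (\<Sum>k<m. mpow Q k ** R') + mpow Q m ** (R' + Q ** W)"
      using Suc.IH step by metis
    also have "\<dots> = (\<Sum>k<Suc m. mpow Q k ** R') + mpow Q (Suc m) ** W"
      by (simp add: matrix_add_ldistrib matrix_mul_assoc q1 add.assoc)
    finally show ?case .
  qed
  have Qs: "supper Q" unfolding supper_def Q_def using Lup by (auto simp: le_less)
  have W: "W = (\<Sum>k<?N. mpow Q k ** R')"
    using iter[of ?N] mpow_supper_zero[OF Qs, of ?N] by simp
  have Qb: "cmod (Q$i$j) \<le> 1" for i j
  proof (cases "i = j")
    case True thus ?thesis by (simp add: Q_def)
  next
    case False
    have "cmod (L$i$j) / cmod (L$i$i) \<le> 1"
      using Loff[OF False] Ldiag[of i] by (simp add: divide_le_eq)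
    thus ?thesis using False by (simp add: Q_def norm_divide)
  qed
  have R'b: "cmod (R'$i$j) \<le> 2" for i j
  proof -
    have "cmod (R$i$j) / cmod (L$i$i) \<le> 2"
      using Rb[of i j] Ldiag[of i] by (simp add: divide_le_eq)
    thus ?thesis by (simp add: R'_def norm_divide)
  qed
  have "cmod (W$i$j) \<le> (\<Sum>k<?N. cmod ((mpow Q k ** R')$i$j))"
    unfolding W by (simp add: norm_sum)
  also have "\<dots> \<le> (\<Sum>k<?N. 2 * real ?N ^ (k+1))"
  proof (intro sum_mono)
    fix k
    have "cmod ((mpow Q k ** R')$i$j) \<le> ?N * (real ?N ^ k * 2)"
      by (rule prod_bound) (auto intro: mpow_bound Qb R'b)
    thus "cmod ((mpow Q k ** R')$i$j) \<le> 2 * real ?N ^ (k+1)" by (simp add: mult_ac)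
  qed
  finally show ?thesis by (simp add: CW_def)
qed



lemma matrix_sub_ldistrib: "(A::'a::comm_ring_1^'m^'k) ** (B - C) = A ** B - A ** C"
  by (simp add: matrix_matrix_mult_def vec_eq_iff sum_subtractf algebra_simps)

lemma matrix_sum_mult:
  fixes M :: "'i \<Rightarrow> 'a::comm_ring_1^'m^'k" and B :: "'a^'p^'m"
  shows "(\<Sum>k\<in>K. M k) ** B = (\<Sum>k\<in>K. M k ** B)"
proof -
  have "((\<Sum>k\<in>K. M k) ** B) $ i $ j = (\<Sum>k\<in>K. M k ** B) $ i $ j" for i j
  proof -
    have "((\<Sum>k\<in>K. M k) ** B) $ i $ j = (\<Sum>l\<in>UNIV. \<Sum>k\<in>K. M k $ i $ l * B $ l $ j)"
      by (simp add: matrix_matrix_mult_def sum_distrib_right)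
    also have "\<dots> = (\<Sum>k\<in>K. \<Sum>l\<in>UNIV. M k $ i $ l * B $ l $ j)" by (rule sum.swap)
    finally show ?thesis by (simp add: matrix_matrix_mult_def)
  qed
  thus ?thesis by (simp add: vec_eq_iff)
qed

definition uppert :: "('a::zero)^('n::{finite,linorder})^('n::{finite,linorder}) \<Rightarrow> bool" where
 "uppert A \<longleftrightarrow> (\<forall>i j. j < i \<longrightarrow> A$i$j = 0)"

lemma uppert_mult:
  fixes A B :: "('a::comm_ring_1)^('n::{finite,linorder})^('n::{finite,linorder})"
  assumes "uppert A" "uppert B"
  shows "uppert (A ** B)"
proof -
  have "(A ** B)$i$j = 0" if "j < i" for i j
  proof -
    have "A$i$l * B$l$j = 0" for l
    proof (cases "l < i")
      case True thus ?thesis using assms(1) by (simp add: uppert_def)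
    next
      case False hence "j < l" using that by auto
      thus ?thesis using assms(2) by (simp add: uppert_def)
    qed
    thus ?thesis by (simp add: matrix_matrix_mult_def)
  qed
  thus ?thesis by (simp add: uppert_def)
qed

lemma left_inverse_tri:
  fixes A :: "real^('n::{finite,linorder})^('n::{finite,linorder})"
  assumes up: "uppert A" and diag: "\<And>i. A$i$i = c" and c: "c > 0"
  shows "\<exists>P. P ** A = mat 1 \<and> uppert P"
proof -
  define NA where "NA = (\<chi> i j. if i = j then 0 else - A$i$j / c)"
  have NAs: "supper NA" unfolding supper_def NA_def using up by (auto simp: uppert_def le_less)
  have Aeq: "A = c *\<^sub>R (mat 1 - NA)"
    using c diag by (auto simp: vec_eq_iff NA_def mat_def)
  define S where "S = (\<Sum>k<CARD('n). mpow NA k)"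
  have "S ** (mat 1 - NA) = (\<Sum>k<CARD('n). mpow NA k - mpow NA (Suc k))"
  proof -
    have q1: "mpow NA k ** NA = mpow NA (Suc k)" for k
      using mpow_add[of NA k 1] by simp
    show ?thesis unfolding S_def matrix_sum_mult by (simp add: matrix_sub_ldistrib q1)
  qed
  also have "\<dots> = mat 1"
    by (subst sum_lessThan_telescope') (simp add: mpow_supper_zero[OF NAs])
  finally have S1: "S ** (mat 1 - NA) = mat 1" .
  define P where "P = (1/c) *\<^sub>R S"
  have "P ** A = mat 1"
    unfolding P_def Aeq using c S1 by (simp add: matrix_scalar_ac scalar_matrix_assoc[symmetric])
  moreover have "uppert P"
  proof -
    have "uppert (mpow NA k)" for k
    proof (cases k)
      case 0 thus ?thesis by (simp add: uppert_def mat_def)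
    next
      case (Suc m) thus ?thesis using mpow_supper_low[OF NAs, of k] unfolding uppert_def by (metis less_imp_le zero_less_Suc)
    qed
    hence "S $ i $ j = 0" if "j < i" for i j
      unfolding S_def using that by (simp add: uppert_def)
    thus ?thesis by (simp add: P_def uppert_def)
  qed
  ultimately show ?thesis by blast
qed



lemma cnj_split: "cnj z = of_real (Re z) - \<i> * of_real (Im z)"
  by (simp add: complex_eq_iff)

lemma crown_bound:
  fixes X :: "real^('n::{finite,linorder})^('n::{finite,linorder})"
  assumes Xs: "supper X" and cr: "in_crown (Ec \<i> (cmat X))"
  shows "cmod (Ec (2*\<i>) (cmat X) $ i $ j) \<le> CW CARD('n)"
proof -
  define R where "R = cmat X"
  define h where "h = Ec \<i> R"
  have Rs: "supper R" using Xs by (simp add: R_def supper_cmat)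
  have hlow: "h$i$j = (if i = j then 1 else 0)" if "j \<le> i" for i j
    unfolding h_def using Ec_diag[OF Rs that] .
  obtain \<omega> where w1: "cmod \<omega> = 1"
    and ineq: "\<And>v::real^('n::{finite,linorder}). 0 \<le> Re (\<omega> * (\<Sum>j\<in>UNIV. (\<Sum>i\<in>UNIV. of_real (v$i) * h$i$j)^2))"
    using crown_ineq[OF cr[folded R_def, folded h_def]] by blast
  define lst where "lst = Max (UNIV :: 'n set)"
  have lst: "j \<le> lst" for j by (simp add: lst_def)
  have "0 \<le> Re \<omega>"
  proof -
    have "(\<Sum>i\<in>UNIV. of_real (axis lst 1 $ i) * h$i$j) = (if lst = j then 1 else 0)" for j
    proof -
      have "(\<Sum>i\<in>UNIV. of_real (axis lst (1::real) $ i) * h$i$j) = (\<Sum>i\<in>UNIV. (if i = lst then 1 else 0) * h$i$j)"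
        by (intro sum.cong) (auto simp: axis_def)
      also have "\<dots> = h$lst$j" by (simp add: sum_ifmult)
      finally show ?thesis using hlow[OF lst[of j]] by simp
    qed
    hence "(\<Sum>j\<in>UNIV. (\<Sum>i\<in>UNIV. of_real (axis lst 1 $ i) * h$i$j)^2) = 1"
      by (simp add: if_distrib[of "\<lambda>x. x^2"] cong: if_cong)
    thus ?thesis using ineq[of "axis lst 1"] by simp
  qed
  define \<zeta> where "\<zeta> = csqrt \<omega>"
  have z2: "\<zeta>^2 = \<omega>" by (simp add: \<zeta>_def)
  have zn: "cmod \<zeta> = 1" using w1 by (simp add: \<zeta>_def)
  have zpos: "0 < Re \<zeta>"
  proof (rule ccontr)
    assume "\<not> 0 < Re \<zeta>"
    hence "Re \<zeta> = 0" using Re_csqrt[of \<omega>] by (simp add: \<zeta>_def)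
    hence "Re \<omega> = -((Im \<zeta>)^2)" using z2 by (auto simp: power2_eq_square)
    hence "Im \<zeta> = 0" using \<open>0 \<le> Re \<omega>\<close> by (smt (verit) zero_le_power2 power2_eq_square mult_eq_0_iff)
    hence "\<zeta> = 0" using \<open>Re \<zeta> = 0\<close> by (simp add: complex_eq_iff)
    thus False using zn by simp
  qed
  define M where "M = (\<chi> i j. \<zeta> * h$i$j)"
  define A where "A = (\<chi> i j. Re (M$i$j))"
  define B where "B = (\<chi> i j. Im (M$i$j))"
  have Mre: "M$i$j = of_real (A$i$j) + \<i> * of_real (B$i$j)" for i j
    by (simp add: A_def B_def complex_eq[symmetric])
  have AB: "(\<Sum>j\<in>UNIV. ((v v* B)$j)^2) \<le> (\<Sum>j\<in>UNIV. ((v v* A)$j)^2)" for v :: "real^('n::{finite,linorder})"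
  proof -
    define w where "w j = (\<Sum>i\<in>UNIV. of_real (v$i) * M$i$j)" for j
    have rw: "Re (w j) = (v v* A)$j" "Im (w j) = (v v* B)$j" for j
      by (simp_all add: w_def vector_matrix_mult_def A_def B_def)
    have "\<omega> * (\<Sum>j\<in>UNIV. (\<Sum>i\<in>UNIV. of_real (v$i) * h$i$j)^2) = (\<Sum>j\<in>UNIV. (w j)^2)"
    proof -
      have "\<omega> * (\<Sum>i\<in>UNIV. of_real (v$i) * h$i$j)^2 = (w j)^2" for j
      proof -
        have "w j = \<zeta> * (\<Sum>i\<in>UNIV. of_real (v$i) * h$i$j)"
          by (simp add: w_def M_def sum_distrib_left mult_ac)
        thus ?thesis by (simp add: power_mult_distrib z2)
      qed
      thus ?thesis by (simp add: sum_distrib_left)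
    qed
    moreover have "Re ((w j)^2) = ((v v* A)$j)^2 - ((v v* B)$j)^2" for j
      by (simp add: power2_eq_square rw[symmetric])
    ultimately have "Re (\<omega> * (\<Sum>j\<in>UNIV. (\<Sum>i\<in>UNIV. of_real (v$i) * h$i$j)^2)) = (\<Sum>j\<in>UNIV. ((v v* A)$j)^2) - (\<Sum>j\<in>UNIV. ((v v* B)$j)^2)"
      by (simp add: sum_subtractf)
    thus ?thesis using ineq[of v] by simp
  qed
  have Aup: "uppert A" and Bup: "uppert B"
    using hlow by (auto simp: uppert_def A_def B_def M_def)
  have Adiag: "A$i$i = Re \<zeta>" for i using hlow[of i i] by (simp add: A_def M_def)
  obtain P where PA: "P ** A = mat 1" and Pup: "uppert P"
    using left_inverse_tri[OF Aup Adiag zpos] by blast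
  define T where "T = P ** B"
  have Tup: "uppert T" unfolding T_def by (rule uppert_mult[OF Pup Bup])
  have Tb: "\<bar>T$i$j\<bar> \<le> 1" for i j
  proof -
    define a where "a = (axis i 1 :: real^('n::{finite,linorder}))"
    define v where "v = a v* P"
    have va: "v v* A = a" by (simp add: v_def vector_matrix_mul_assoc PA)
    have vb: "v v* B = a v* T" by (simp add: v_def vector_matrix_mul_assoc T_def)
    have aT: "(a v* T)$k = T$i$k" for k
    proof -
      have "(a v* T)$k = (\<Sum>l\<in>UNIV. (if l = i then 1 else 0) * T$l$k)"
        by (simp add: vector_matrix_mult_def a_def axis_def)
      thus ?thesis by (simp add: sum_ifmult)
    qed
    have aa: "(\<Sum>k\<in>UNIV. (a$k)^2) = 1"
    proof -
      have "(\<Sum>k\<in>UNIV. (a$k)^2) = (\<Sum>k\<in>UNIV. if k = i then 1 else 0)"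
        by (intro sum.cong) (auto simp: a_def axis_def)
      thus ?thesis by simp
    qed
    have "(T$i$j)^2 \<le> (\<Sum>k\<in>UNIV. (T$i$k)^2)"
      by (rule member_le_sum) auto
    also have "\<dots> \<le> 1" using AB[of v] va vb aT aa by simp
    finally show ?thesis by (simp add: abs_square_le_1)
  qed
  define Mb where "Mb = (\<chi> i j. cnj (M$i$j))"
  have MbM: "Mb ** M = mat 1"
  proof -
    have Mb': "Mb$i$j = cnj \<zeta> * Ec (-\<i>) R $i$j" for i j
      by (simp add: Mb_def M_def h_def R_def cnj_Ec)
    have "(Mb ** M)$i$j = (cnj \<zeta> * \<zeta>) * (Ec (-\<i>) R ** Ec \<i> R)$i$j" for i j
      by (simp add: matrix_matrix_mult_def Mb' M_def h_def sum_distrib_left mult_ac)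
    moreover have "cnj \<zeta> * \<zeta> = 1"
      using complex_norm_square[of \<zeta>] zn by (simp add: mult.commute)
    ultimately show ?thesis by (simp add: Ec_mult[OF Rs] Ec_zero vec_eq_iff)
  qed
  define L where "L = (\<chi> i j. (if i = j then 1 else 0) - \<i> * of_real (T$i$j))"
  define Rr where "Rr = (\<chi> i j. (if i = j then 1 else 0) + \<i> * of_real (T$i$j))"
  have PMb: "cmat P ** Mb = L"
  proof -
    have "(cmat P ** Mb)$i$j = of_real ((P ** A)$i$j) - \<i> * of_real ((P ** B)$i$j)" for i j
      by (simp add: matrix_matrix_mult_def cmat_def Mb_def Mre sum_subtractf sum_distrib_left algebra_simps)
    thus ?thesis by (simp add: vec_eq_iff L_def PA T_def mat_def)
  qed
  have PM: "cmat P ** M = Rr"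
  proof -
    have "(cmat P ** M)$i$j = of_real ((P ** A)$i$j) + \<i> * of_real ((P ** B)$i$j)" for i j
      by (simp add: matrix_matrix_mult_def cmat_def Mre sum.distrib sum_distrib_left algebra_simps)
    thus ?thesis by (simp add: vec_eq_iff Rr_def PA T_def mat_def)
  qed
  have LW: "L ** (M ** M) = Rr"
    by (metis PMb PM MbM matrix_mul_assoc matrix_mul_lid)
  have Wb: "cmod ((M ** M)$i$j) \<le> CW CARD('n)"
  proof (rule tri_solve[OF _ _ _ _ LW])
    fix i j :: 'n
    show "j < i \<Longrightarrow> L$i$j = 0" using Tup by (simp add: L_def uppert_def)
    show "1 \<le> cmod (L$i$i)"
      by (simp add: L_def cmod_def)
    show "i \<noteq> j \<Longrightarrow> cmod (L$i$j) \<le> 1" using Tb[of i j] by (simp add: L_def norm_mult)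
    have "cmod (Rr$i$j) \<le> 1 + \<bar>T$i$j\<bar>"
      unfolding Rr_def using norm_triangle_ineq[of "if i = j then 1 else 0" "\<i> * of_real (T$i$j)"]
      by (auto simp: norm_mult)
    thus "cmod (Rr$i$j) \<le> 2" using Tb[of i j] by simp
  qed
  have "(M ** M)$i$j = \<zeta>^2 * Ec (2*\<i>) R $i$j"
  proof -
    have "(M ** M)$i$j = \<zeta>^2 * (h ** h)$i$j"
      by (simp add: matrix_matrix_mult_def M_def sum_distrib_left power2_eq_square mult_ac)
    moreover have "h ** h = Ec (2*\<i>) R" unfolding h_def using Ec_mult[OF Rs, of \<i> \<i>] by simp
    ultimately show ?thesis by simp
  qed
  hence "cmod ((M ** M)$i$j) = cmod (Ec (2*\<i>) R $i$j)" using zn by (simp add: norm_mult norm_power)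
  thus ?thesis using Wb by (simp add: R_def)
qed



lemma gap_pow:
  fixes R :: "complex^('n::{finite,linorder})^('n::{finite,linorder})" and \<beta> :: real
  assumes Rs: "supper R" and b0: "0 \<le> \<beta>"
    and hb: "\<And>a b. i \<le> a \<Longrightarrow> b \<le> j \<Longrightarrow> (a,b) \<noteq> (i,j) \<Longrightarrow> cmod (R$a$b) \<le> \<beta>"
  shows "1 \<le> k \<Longrightarrow> i \<le> a \<Longrightarrow> b \<le> j \<Longrightarrow> ((a,b) \<noteq> (i,j) \<or> 2 \<le> k) \<Longrightarrow>
         cmod (mpow R k $ a $ b) \<le> real CARD('n) ^ (k-1) * \<beta>^k"
proof (induction k arbitrary: a b)
  case 0 thus ?case by simp
next
  case (Suc k)
  show ?case
  proof (cases "k = 0")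
    case True thus ?thesis using Suc.prems hb by (simp add: matrix_matrix_mult_def[symmetric])
  next
    case False
    have trm: "cmod (R$a$l * mpow R k $ l $ b) \<le> \<beta> * (real CARD('n) ^ (k-1) * \<beta>^k)" for l
    proof (cases "l \<le> a")
      case True hence "R$a$l = 0" using Rs by (simp add: supper_def)
      thus ?thesis using b0 by simp
    next
      case la: False
      show ?thesis
      proof (cases "b \<le> l")
        case True hence "mpow R k $ l $ b = 0" using mpow_supper_low[OF Rs, of k b l] False by simp
        thus ?thesis using b0 by simp
      next
        case lb: False
        have lj: "l < j" using lb Suc.prems(3) by auto
        have "cmod (R$a$l) \<le> \<beta>" using hb[of a l] Suc.prems(2) lj by (simp add: less_imp_le less_imp_neq)
        moreover have "cmod (mpow R k $ l $ b) \<le> real CARD('n) ^ (k-1) * \<beta>^k"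
        proof -
          have il: "i < l" using la Suc.prems(2) by auto
          have ne: "(l,b) \<noteq> (i,j)" using il by auto
          have "1 \<le> k" using False by simp
          thus ?thesis using Suc.IH[of l b] less_imp_le[OF il] Suc.prems(3) ne by blast
        qed
        ultimately show ?thesis by (simp add: norm_mult mult_mono' b0)
      qed
    qed
    have "cmod (mpow R (Suc k) $ a $ b) \<le> (\<Sum>l\<in>UNIV. cmod (R$a$l * mpow R k $ l $ b))"
      by (simp add: matrix_matrix_mult_def norm_sum)
    also have "\<dots> \<le> (\<Sum>l\<in>(UNIV::'n set). \<beta> * (real CARD('n) ^ (k-1) * \<beta>^k))"
      by (intro sum_mono trm)
    also have "\<dots> = real CARD('n) ^ (Suc k - 1) * \<beta>^Suc k"
      using False by (cases k) (simp_all add: mult_ac)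
    finally show ?thesis .
  qed
qed

definition phi :: "nat \<Rightarrow> real \<Rightarrow> real \<Rightarrow> real" where
  "phi N C \<beta> = C + (\<Sum>k<N. (2 * real N * \<beta>)^k)"

lemma entry_bound:
  fixes X :: "real^('n::{finite,linorder})^('n::{finite,linorder})" and \<beta> :: real
  assumes Xs: "supper X" and b0: "0 \<le> \<beta>" and ij: "i < j"
    and hb: "\<And>a b. i \<le> a \<Longrightarrow> b \<le> j \<Longrightarrow> (a,b) \<noteq> (i,j) \<Longrightarrow> \<bar>X$a$b\<bar> \<le> \<beta>"
    and EC: "cmod (Ec (2*\<i>) (cmat X) $ i $ j) \<le> C"
  shows "\<bar>X$i$j\<bar> \<le> phi CARD('n) C \<beta>"
proof -
  let ?N = "CARD('n)"
  define R where "R = cmat X"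
  have Rs: "supper R" using Xs by (simp add: R_def supper_cmat)
  have hbR: "cmod (R$a$b) \<le> \<beta>" if "i \<le> a" "b \<le> j" "(a,b) \<noteq> (i,j)" for a b
    using hb[OF that] by (simp add: R_def cmat_def)
  define f where "f k = (2*\<i>)^k / fact k * (mpow R k $ i $ j)" for k
  define g where "g k = (if k = 1 then 0 else f k)" for k
  have N2: "1 < ?N"
  proof -
    have "card {i, j} \<le> ?N" by (rule card_mono) auto
    thus ?thesis using ij by simp
  qed
  have "(\<Sum>k<?N. f k) = (\<Sum>k<?N. g k + (if k = 1 then f 1 else 0))"
    by (intro sum.cong) (auto simp: g_def)
  also have "\<dots> = (\<Sum>k<?N. g k) + f 1" using N2 by (simp add: sum.distrib)
  finally have split: "Ec (2*\<i>) R $ i $ j = (\<Sum>k<?N. g k) + f 1" by (simp add: Ec_def f_def)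
  have f1: "f 1 = 2 * \<i> * of_real (X$i$j)" by (simp add: f_def R_def cmat_def)
  have gb: "cmod (g k) \<le> (2 * real ?N * \<beta>)^k" for k
  proof (cases "k \<le> 1")
    case True
    hence "g k = 0" using ij by (auto simp: g_def f_def le_Suc_eq mat_def)
    thus ?thesis using b0 by simp
  next
    case False
    have p: "cmod (mpow R k $ i $ j) \<le> real ?N ^ (k-1) * \<beta>^k"
      using gap_pow[OF Rs b0 hbR, where k=k and a=i and b=j] False by auto
    have "cmod (g k) = 2^k / fact k * cmod (mpow R k $ i $ j)"
      using False by (simp add: g_def f_def norm_mult norm_divide norm_power)
    also have "\<dots> \<le> 2^k * cmod (mpow R k $ i $ j)"
      by (intro mult_right_mono) (auto simp: divide_le_eq)
    also have "\<dots> \<le> 2^k * (real ?N ^ (k-1) * \<beta>^k)"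
      using p by (intro mult_left_mono) auto
    also have "\<dots> \<le> 2^k * (real ?N ^ k * \<beta>^k)"
      using N2 b0 by (intro mult_left_mono mult_right_mono power_increasing) auto
    also have "\<dots> = (2 * real ?N * \<beta>)^k" by (simp add: power_mult_distrib)
    finally show ?thesis .
  qed
  have "2 * \<bar>X$i$j\<bar> = cmod (f 1)" unfolding f1 by (simp add: norm_mult)
  also have "\<dots> = cmod (Ec (2*\<i>) R $ i $ j - (\<Sum>k<?N. g k))" using split by simp
  also have "\<dots> \<le> C + (\<Sum>k<?N. cmod (g k))"
    using EC norm_triangle_ineq4[of "Ec (2*\<i>) R $ i $ j" "\<Sum>k<?N. g k"] norm_sum[of g "{..<?N}"]
    by (simp add: R_def)
  also have "\<dots> \<le> C + (\<Sum>k<?N. (2 * real ?N * \<beta>)^k)"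
    by (intro add_left_mono sum_mono gb)
  finally have "2 * \<bar>X$i$j\<bar> \<le> phi ?N C \<beta>" by (simp add: phi_def)
  moreover have "0 \<le> phi ?N C \<beta>" using calculation by linarith
  ultimately show ?thesis by linarith
qed



primrec Kg :: "nat \<Rightarrow> nat \<Rightarrow> real" where
  "Kg N 0 = 0"
| "Kg N (Suc d) = phi N (CW N) (Kg N d)"

lemma CW_nonneg: "0 \<le> CW N" by (simp add: CW_def sum_nonneg)

lemma Kg_nonneg: "0 \<le> Kg N d"
  by (induction d) (simp_all add: phi_def CW_nonneg sum_nonneg)

lemma gap_all:
  fixes X :: "real^('n::{finite,linorder})^('n::{finite,linorder})"
  assumes Xs: "supper X" and EC: "\<And>i j. cmod (Ec (2*\<i>) (cmat X) $ i $ j) \<le> CW CARD('n)"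
  shows "card {m. i \<le> m \<and> m \<le> j} \<le> d \<Longrightarrow> \<bar>X$i$j\<bar> \<le> Kg CARD('n) d"
proof (induction d arbitrary: i j)
  case 0
  hence "{m. i \<le> m \<and> m \<le> j} = {}" by simp
  hence "j < i" by (metis (mono_tags, lifting) empty_Collect_eq order_refl not_le)
  thus ?case using Xs by (simp add: supper_def)
next
  case (Suc d)
  show ?case
  proof (cases "j \<le> i")
    case True thus ?thesis using Xs Kg_nonneg[of "CARD('n)" "Suc d"] by (simp add: supper_def del: Kg.simps)
  next
    case False
    hence ij: "i < j" by simp
    show ?thesis
    proof -
      have "\<bar>X$i$j\<bar> \<le> phi CARD('n) (CW CARD('n)) (Kg CARD('n) d)"
      proof (rule entry_bound[OF Xs Kg_nonneg ij _ EC])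
        fix a b assume ia: "i \<le> a" and bj: "b \<le> j" and ne: "(a,b) \<noteq> (i,j)"
        show "\<bar>X$a$b\<bar> \<le> Kg CARD('n) d"
        proof (cases "b \<le> a")
          case True thus ?thesis using Xs Kg_nonneg by (simp add: supper_def)
        next
          case False
          have "{m. a \<le> m \<and> m \<le> b} \<subset> {m. i \<le> m \<and> m \<le> j}"
          proof
            show "{m. a \<le> m \<and> m \<le> b} \<subseteq> {m. i \<le> m \<and> m \<le> j}" using ia bj by auto
            show "{m. a \<le> m \<and> m \<le> b} \<noteq> {m. i \<le> m \<and> m \<le> j}"
            proof
              assume eq: "{m. a \<le> m \<and> m \<le> b} = {m. i \<le> m \<and> m \<le> j}"
              have "i \<in> {m. i \<le> m \<and> m \<le> j}" "j \<in> {m. i \<le> m \<and> m \<le> j}" using ij by auto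
              hence "a \<le> i" "j \<le> b" using eq by auto
              thus False using ia bj ne by auto
            qed
          qed
          hence "card {m. a \<le> m \<and> m \<le> b} < card {m. i \<le> m \<and> m \<le> j}"
            by (intro psubset_card_mono) auto
          hence "card {m. a \<le> m \<and> m \<le> b} \<le> d" using Suc.prems by simp
          thus ?thesis by (rule Suc.IH)
        qed
      qed
      thus ?thesis by simp
    qed
  qed
qed

theorem mainTheorem3:
  shows "bounded (Lambda :: (real^('n::{finite,linorder})^('n::{finite,linorder})) set)"
proof -
  let ?N = "CARD('n)"
  let ?K = "Kg ?N ?N"
  have "norm X \<le> real ?N * (real ?N * ?K)" if X: "X \<in> (Lambda :: (real^('n::{finite,linorder})^('n::{finite,linorder})) set)" for X
  proof -
    have X1: "X \<in> nilp_alg" and X2: "in_crown (mexp (imat X))"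
      using X connected_component_subset unfolding Lambda_def by blast+
    have Xs: "supper X" using X1 by (rule supper_nilp)
    have cr: "in_crown (Ec \<i> (cmat X))" using X2 mexp_nilp[OF Xs] by simp
    have EC: "cmod (Ec (2*\<i>) (cmat X) $ i $ j) \<le> CW ?N" for i j
      by (rule crown_bound[OF Xs cr])
    have bd: "\<bar>X$i$j\<bar> \<le> ?K" for i j
    proof (rule gap_all[OF Xs EC])
      show "card {m. i \<le> m \<and> m \<le> j} \<le> ?N" by (rule card_mono) auto
    qed
    have "norm X \<le> (\<Sum>i\<in>UNIV. norm (X$i))"
      by (simp add: norm_vec_def L2_set_le_sum)
    also have "\<dots> \<le> (\<Sum>i\<in>(UNIV::'n set). real ?N * ?K)"
    proof (intro sum_mono)
      fix i
      have "norm (X$i) \<le> (\<Sum>j\<in>UNIV. \<bar>X$i$j\<bar>)" by (rule norm_le_l1_cart)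
      also have "\<dots> \<le> (\<Sum>j\<in>(UNIV::'n set). ?K)" by (intro sum_mono bd)
      finally show "norm (X$i) \<le> real ?N * ?K" by simp
    qed
    finally show ?thesis by simp
  qed
  thus ?thesis unfolding bounded_iff by blast
qed

end
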